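(* Let $X$ be an $n$-dimensional polyhedral normed space and let $Y \subseteq X$ be a subspace of dimension $k$, where $1 \leq k \leq n-1$. Suppose that some $P_0 \in \mathcal{P}_{\min}(X, Y)$ has at most $m$ norming pairs. Then $\dim \mathcal{P}_{\min}(X, Y) \geq k(n-k)-m+1$.
   Context: A normed space $X=(\mathbb{R}^n,\|\cdot\|)$ is polyhedral if its unit ball is a convex polytope. A projection onto $Y$ is a linear $P:X\to Y$ with $P|_Y=\mathrm{id}_Y$; $\lambda(Y,X)$ is the infimum of the operator norms of projections and $\mathcal{P}_{\min}(X,Y)$ the set of projections of norm $\lambda(Y,X)$; $\dim\mathcal{P}_{\min}(X,Y)$ is the affine dimension of this convex subset of $\mathcal{L}(X,X)$. A norming pair for a projection $P$ is a pair $(x,f)\in \mathrm{ext}\,B_X\times \mathrm{ext}\,B_{X^*}$ (extreme points of the unit balls of $X$ and $X^*$) with $f(P(x))=\|P\|$. *)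

theory Defs
  imports "HOL-Analysis.Analysis"
begin

definition is_norm :: "(real ^ 'n \<Rightarrow> real) \<Rightarrow> bool" where
  "is_norm N \<longleftrightarrow> (\<forall>x. N x \<ge> 0) \<and> (\<forall>x. N x = 0 \<longleftrightarrow> x = 0) \<and>
     (\<forall>x y. N (x + y) \<le> N x + N y) \<and> (\<forall>c x. N (c *\<^sub>R x) = \<bar>c\<bar> * N x)"

definition unit_ball :: "(real ^ 'n \<Rightarrow> real) \<Rightarrow> (real ^ 'n) set" where
  "unit_ball N = {x. N x \<le> 1}"

definition polyhedral_norm :: "(real ^ 'n \<Rightarrow> real) \<Rightarrow> bool" where
  "polyhedral_norm N \<longleftrightarrow> is_norm N \<and> polytope (unit_ball N)"

text \<open>Unit ball of the dual space; a functional f is represented by the vector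
  v with f x = v \<bullet> x.\<close>
definition dual_unit_ball :: "(real ^ 'n \<Rightarrow> real) \<Rightarrow> (real ^ 'n) set" where
  "dual_unit_ball N = {v. \<forall>x. N x \<le> 1 \<longrightarrow> v \<bullet> x \<le> 1}"

definition op_norm :: "(real ^ 'n \<Rightarrow> real) \<Rightarrow> real ^ 'n ^ 'n \<Rightarrow> real" where
  "op_norm N P = Sup ((\<lambda>x. N (P *v x)) ` unit_ball N)"

definition projections :: "(real ^ 'n) set \<Rightarrow> (real ^ 'n ^ 'n) set" where
  "projections Y = {P. (\<forall>x. P *v x \<in> Y) \<and> (\<forall>y\<in>Y. P *v y = y)}"

definition proj_const :: "(real ^ 'n \<Rightarrow> real) \<Rightarrow> (real ^ 'n) set \<Rightarrow> real" where
  "proj_const N Y = Inf (op_norm N ` projections Y)"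

definition min_projections :: "(real ^ 'n \<Rightarrow> real) \<Rightarrow> (real ^ 'n) set \<Rightarrow> (real ^ 'n ^ 'n) set" where
  "min_projections N Y = {P \<in> projections Y. op_norm N P = proj_const N Y}"

definition norming_pairs :: "(real ^ 'n \<Rightarrow> real) \<Rightarrow> real ^ 'n ^ 'n \<Rightarrow> ((real ^ 'n) \<times> (real ^ 'n)) set" where
  "norming_pairs N P = {(x, f). (x extreme_point_of (unit_ball N)) \<and>
      (f extreme_point_of (dual_unit_ball N)) \<and> f \<bullet> (P *v x) = op_norm N P}"

end

theory Submission
  imports Defs
begin

definition outer :: "real^'n \<Rightarrow> real^'m \<Rightarrow> real^'m^'n" where
  "outer u w = (\<chi> i j. u$i * w$j)"

lemma outer_inner_mat: "outer f x \<bullet> (v::real^'m^'n) = f \<bullet> (v *v x)"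
  by (simp add: outer_def inner_vec_def matrix_vector_mult_def sum_distrib_left mult_ac)

lemma outer_mult: "outer b c *v x = (c \<bullet> x) *\<^sub>R b"
  by (simp add: outer_def inner_vec_def matrix_vector_mult_def vec_eq_iff sum_distrib_left mult_ac)

lemma outer_outer: "outer a b \<bullet> outer c d = (a \<bullet> c) * (b \<bullet> d)"
  by (simp add: outer_def inner_vec_def sum_distrib_left sum_distrib_right mult_ac)

lemma outer_neg: "outer (-a) (-b) = outer a b"
  by (simp add: outer_def)

lemma mv_add: "((A::real^'n^'m) + B) *v x = A *v x + B *v x"
  by (simp add: matrix_vector_mult_def vec_eq_iff sum.distrib algebra_simps)
lemma mv_scale: "((c::real) *\<^sub>R (A::real^'n^'m)) *v x = c *\<^sub>R (A *v x)"
  by (simp add: matrix_vector_mult_def vec_eq_iff sum_distrib_left algebra_simps)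
lemma mv_neg: "(A::real^'n^'m) *v (-x) = - (A *v x)"
  by (simp add: matrix_vector_mult_def vec_eq_iff sum_negf)
lemma mv_zero: "(0::real^'n^'m) *v x = 0"
  by (simp add: matrix_vector_mult_def vec_eq_iff)

context fixes N :: "real^'n \<Rightarrow> real" assumes nN: "is_norm N" begin

lemma N0: "N 0 = 0" using nN by (simp add: is_norm_def)
lemma Nnn: "N x \<ge> 0" using nN by (simp add: is_norm_def)
lemma Npos: "x \<noteq> 0 \<Longrightarrow> N x > 0" using nN unfolding is_norm_def by (metis order_le_less)
lemma Ntri: "N (x + y) \<le> N x + N y" using nN by (simp add: is_norm_def)
lemma Nscale: "N (c *\<^sub>R x) = \<bar>c\<bar> * N x" using nN by (simp add: is_norm_def)
lemma Nneg: "N (- x) = N x" using Nscale[of "-1" x] by simp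

lemma convex_sublevel: "convex {x. N ((M::real^'n^'n) *v x) \<le> c}"
proof (rule convexI, simp)
  fix x y :: "real^'n" and u v :: real
  assume h: "N (M *v x) \<le> c" "N (M *v y) \<le> c" "0 \<le> u" "0 \<le> v" "u + v = 1"
  have eq: "M *v (u *\<^sub>R x + v *\<^sub>R y) = u *\<^sub>R (M *v x) + v *\<^sub>R (M *v y)"
    by (simp add: matrix_vector_mult_def vec_eq_iff sum_distrib_left sum.distrib algebra_simps)
  hence "N (M *v (u *\<^sub>R x + v *\<^sub>R y)) \<le> u * N (M *v x) + v * N (M *v y)"
  proof -
    have "N (u *\<^sub>R (M *v x) + v *\<^sub>R (M *v y)) \<le> N (u *\<^sub>R (M *v x)) + N (v *\<^sub>R (M *v y))" by (rule Ntri)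
    also have "\<dots> = u * N (M *v x) + v * N (M *v y)" using h by (simp add: Nscale)
    finally show ?thesis unfolding eq .
  qed
  also have "\<dots> \<le> u * c + v * c" using h by (simp add: add_mono mult_left_mono)
  also have "\<dots> = c" using h(5) by (simp add: distrib_right[symmetric])
  finally show "N (M *v (u *\<^sub>R x + v *\<^sub>R y)) \<le> c" .
qed

lemma zero_in_B: "0 \<in> unit_ball N" by (simp add: unit_ball_def N0)
lemma zero_in_D: "0 \<in> dual_unit_ball N" by (simp add: dual_unit_ball_def)
lemma B_neg: "x \<in> unit_ball N \<Longrightarrow> -x \<in> unit_ball N" by (simp add: unit_ball_def Nneg)
lemma D_neg: "v \<in> dual_unit_ball N \<Longrightarrow> -v \<in> dual_unit_ball N"
  unfolding dual_unit_ball_def proof (intro CollectI allI impI)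
  fix x assume "v \<in> {v. \<forall>x. N x \<le> 1 \<longrightarrow> v \<bullet> x \<le> 1}" "N x \<le> 1"
  moreover have "N (-x) \<le> 1" using \<open>N x \<le> 1\<close> by (simp add: Nneg)
  ultimately have "v \<bullet> (-x) \<le> 1" by blast
  thus "- v \<bullet> x \<le> 1" by simp
qed

lemma D_le: assumes "v \<in> dual_unit_ball N" shows "v \<bullet> y \<le> N y"
proof (cases "y = 0")
  case True then show ?thesis by (simp add: N0)
next
  case False
  hence p: "N y > 0" by (rule Npos)
  have "N ((1 / N y) *\<^sub>R y) = 1" using p by (simp add: Nscale)
  moreover have "\<forall>x. N x \<le> 1 \<longrightarrow> v \<bullet> x \<le> 1" using assms by (simp add: dual_unit_ball_def)
  ultimately have "v \<bullet> ((1 / N y) *\<^sub>R y) \<le> 1" by (metis order_refl)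
  hence "(1 / N y) * (v \<bullet> y) \<le> 1" by (simp only: inner_scaleR_right)
  hence "(v \<bullet> y) / N y \<le> 1" by simp
  thus ?thesis using p by (simp add: divide_le_eq)
qed

lemma ext_sym: assumes "\<And>x. x \<in> S \<Longrightarrow> - x \<in> S" "x extreme_point_of S"
  shows "(-x) extreme_point_of S"
proof -
  have lin: "linear (uminus :: 'a::real_vector \<Rightarrow> 'a)" by (simp add: linear_uminus)
  have inj: "inj (uminus :: 'a::real_vector \<Rightarrow> 'a)" by (simp add: inj_def)
  show ?thesis
  unfolding extreme_point_of_def
  proof (intro conjI ballI)
    show "-x \<in> S" using assms extreme_point_of_def by blast
    fix a b assume ab: "a \<in> S" "b \<in> S"
    show "-x \<notin> open_segment a b"
    proof
      assume "-x \<in> open_segment a b"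
      hence "x \<in> uminus ` open_segment a b" by force
      hence "x \<in> open_segment (-a) (-b)" using open_segment_linear_image[OF lin inj, of a b] by simp
      moreover have "-a \<in> S" "-b \<in> S" using assms ab by auto
      ultimately show False using assms(2) unfolding extreme_point_of_def by blast
    qed
  qed
qed

lemma exists_nonzero: "\<exists>u::real^'n. u \<noteq> 0"
  by (metis axis_nth zero_index zero_neq_one)

lemma zero_not_ext: "\<not> (0 extreme_point_of unit_ball N)"
proof
  assume a: "0 extreme_point_of unit_ball N"
  obtain u :: "real^'n" where u: "u \<noteq> 0" using exists_nonzero by blast
  define e where "e = (1 / N u) *\<^sub>R u"
  have "N e = 1" using Npos[OF u] by (simp add: e_def Nscale)
  hence e: "e \<in> unit_ball N" "e \<noteq> 0" by (auto simp: unit_ball_def N0)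
  have "e \<noteq> -e"
  proof
    assume "e = -e"
    hence "e + e = 0" by (metis add.right_inverse)
    hence "(2::real) *\<^sub>R e = 0" by (simp add: scaleR_2)
    thus False using e by simp
  qed
  hence "midpoint e (-e) \<in> open_segment e (-e)" using midpoint_in_open_segment by blast
  moreover have "midpoint e (-e) = 0" by (simp add: midpoint_def)
  ultimately have "0 \<in> open_segment e (-e)" by simp
  moreover have "-e \<in> unit_ball N" using e B_neg by blast
  ultimately show False using a e unfolding extreme_point_of_def by blast
qed

end

context fixes N :: "real^'n \<Rightarrow> real" assumes pN: "polyhedral_norm N" begin

lemma nN: "is_norm N" using pN by (simp add: polyhedral_norm_def)
lemma polyB: "polytope (unit_ball N)" using pN by (simp add: polyhedral_norm_def)
lemma B_hull: "unit_ball N = convex hull {x. x extreme_point_of unit_ball N}"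
  using polyB Krein_Milman_Minkowski polytope_imp_compact polytope_imp_convex by blast
lemma finEB: "finite {x. x extreme_point_of unit_ball N}"
  using polyB polytope_eq_bounded_polyhedron finite_polyhedron_extreme_points by blast

lemma D_eq: "dual_unit_ball N = \<Inter> ((\<lambda>x. {v. x \<bullet> v \<le> 1}) ` {x. x extreme_point_of unit_ball N})"
proof (intro equalityI subsetI)
  fix v assume v: "v \<in> dual_unit_ball N"
  show "v \<in> \<Inter> ((\<lambda>x. {v. x \<bullet> v \<le> 1}) ` {x. x extreme_point_of unit_ball N})"
  proof (clarsimp)
    fix x assume "x extreme_point_of unit_ball N"
    hence "N x \<le> 1" by (simp add: extreme_point_of_def unit_ball_def)
    hence "v \<bullet> x \<le> 1" using v by (simp add: dual_unit_ball_def)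
    thus "x \<bullet> v \<le> 1" by (simp add: inner_commute)
  qed
next
  fix v assume v: "v \<in> \<Inter> ((\<lambda>x. {v. x \<bullet> v \<le> 1}) ` {x. x extreme_point_of unit_ball N})"
  have "{x. x extreme_point_of unit_ball N} \<subseteq> {x. v \<bullet> x \<le> 1}" using v by (auto simp: inner_commute)
  hence "convex hull {x. x extreme_point_of unit_ball N} \<subseteq> {x. v \<bullet> x \<le> 1}"
    by (rule hull_minimal) (rule convex_halfspace_le)
  hence "unit_ball N \<subseteq> {x. v \<bullet> x \<le> 1}" using B_hull by simp
  thus "v \<in> dual_unit_ball N" by (auto simp: dual_unit_ball_def unit_ball_def)
qed

lemma polyhD: "polyhedron (dual_unit_ball N)"
  unfolding D_eq by (rule polyhedron_Inter) (auto simp: finEB polyhedron_halfspace_le)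

lemma boundedD: "bounded (dual_unit_ball N)"
  unfolding bounded_iff
proof (intro exI ballI)
  fix v assume v: "v \<in> dual_unit_ball N"
  have "\<bar>v $ i\<bar> \<le> N (axis i 1)" for i
  proof -
    have "v \<bullet> axis i 1 \<le> N (axis i 1)" using D_le[OF nN v] .
    moreover have "v \<bullet> (- axis i 1) \<le> N (- axis i 1)" using D_le[OF nN v] .
    ultimately show ?thesis by (simp add: inner_axis Nneg[OF nN])
  qed
  hence "sum (\<lambda>i. \<bar>v $ i\<bar>) UNIV \<le> sum (\<lambda>i. N (axis i 1)) UNIV" by (rule sum_mono)
  thus "norm v \<le> sum (\<lambda>i. N (axis i (1::real))) UNIV" using norm_le_l1_cart[of v] by linarith
qed

lemma polyD: "polytope (dual_unit_ball N)"
  using polyhD boundedD polytope_eq_bounded_polyhedron by blast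
lemma D_hull: "dual_unit_ball N = convex hull {x. x extreme_point_of dual_unit_ball N}"
  using polyD Krein_Milman_Minkowski polytope_imp_compact polytope_imp_convex by blast
lemma finED: "finite {x. x extreme_point_of dual_unit_ball N}"
  using polyD polytope_eq_bounded_polyhedron finite_polyhedron_extreme_points by blast

lemma bipolar: assumes "\<forall>f\<in>dual_unit_ball N. f \<bullet> z \<le> c" shows "N z \<le> c"
proof (rule ccontr)
  assume "\<not> N z \<le> c"
  hence lt: "c < N z" by simp
  have c0: "0 \<le> c" using assms zero_in_D[OF nN] by force
  define s where "s = (c + N z) / 2"
  have s: "c < s" "s < N z" "0 < s" using lt c0 by (auto simp: s_def)
  define y where "y = (1 / s) *\<^sub>R z"
  have "N y = N z / s" using s by (simp add: y_def Nscale[OF nN])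
  hence "N y > 1" using s by simp
  hence yB: "y \<notin> unit_ball N" by (simp add: unit_ball_def)
  have "closed (unit_ball N)" "convex (unit_ball N)"
    using polyB polytope_imp_compact compact_imp_closed polytope_imp_convex by blast+
  then obtain a b where ab: "a \<bullet> y < b" "\<forall>x\<in>unit_ball N. b < a \<bullet> x"
    using separating_hyperplane_closed_point yB by blast
  have b0: "b < 0" using ab(2) zero_in_B[OF nN] by force
  define f where "f = (1 / b) *\<^sub>R a"
  have fD: "f \<in> dual_unit_ball N"
    unfolding dual_unit_ball_def
  proof (intro CollectI allI impI)
    fix x assume "N x \<le> 1"
    hence "b < a \<bullet> x" using ab(2) by (simp add: unit_ball_def)
    hence "(a \<bullet> x) / b < 1" using b0 by (simp add: divide_less_eq)
    thus "f \<bullet> x \<le> 1" by (simp add: f_def)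
  qed
  have "(a \<bullet> y) / b > 1" using ab(1) b0 by (simp add: less_divide_eq)
  hence fy: "f \<bullet> y > 1" by (simp add: f_def)
  have "f \<bullet> z = s * (f \<bullet> y)" using s by (simp add: y_def)
  also have "\<dots> > s" using fy s by simp
  finally have "f \<bullet> z > c" using s by simp
  thus False using assms fD by force
qed

lemma ext_to_D: assumes "\<forall>f. f extreme_point_of dual_unit_ball N \<longrightarrow> f \<bullet> z \<le> c"
  shows "\<forall>f\<in>dual_unit_ball N. f \<bullet> z \<le> c"
proof -
  have "{f. f extreme_point_of dual_unit_ball N} \<subseteq> {f. z \<bullet> f \<le> c}" using assms by (auto simp: inner_commute)
  hence "convex hull {f. f extreme_point_of dual_unit_ball N} \<subseteq> {f. z \<bullet> f \<le> c}"
    by (rule hull_minimal) (rule convex_halfspace_le)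
  thus ?thesis using D_hull by (auto simp: inner_commute)
qed

lemma B_sub: assumes "\<forall>x. x extreme_point_of unit_ball N \<longrightarrow> N (M *v x) \<le> c"
  shows "\<forall>x\<in>unit_ball N. N (M *v x) \<le> c"
proof -
  have "{x. x extreme_point_of unit_ball N} \<subseteq> {x. N (M *v x) \<le> c}" using assms by auto
  hence "convex hull {x. x extreme_point_of unit_ball N} \<subseteq> {x. N (M *v x) \<le> c}"
    by (rule hull_minimal) (rule convex_sublevel[OF nN])
  thus ?thesis using B_hull by auto
qed

lemma bddB: "bdd_above ((\<lambda>x. N (M *v x)) ` unit_ball N)"
proof -
  let ?c = "sum (\<lambda>x. N (M *v x)) {x. x extreme_point_of unit_ball N}"
  have "\<forall>x. x extreme_point_of unit_ball N \<longrightarrow> N (M *v x) \<le> ?c"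
    using finEB by (auto intro!: member_le_sum simp: Nnn[OF nN])
  hence "\<forall>x\<in>unit_ball N. N (M *v x) \<le> ?c" by (rule B_sub)
  thus ?thesis by (auto simp: bdd_above_def)
qed

lemma opnorm_ge: "x \<in> unit_ball N \<Longrightarrow> N (M *v x) \<le> op_norm N M"
  unfolding op_norm_def by (rule cSup_upper) (auto intro: bddB)

lemma opnorm_nn: "0 \<le> op_norm N M"
  using opnorm_ge[OF zero_in_B[OF nN], of M] by (simp add: N0[OF nN])

lemma opnorm_le: assumes "\<forall>x f. x extreme_point_of unit_ball N \<longrightarrow> f extreme_point_of dual_unit_ball N \<longrightarrow> f \<bullet> (M *v x) \<le> c"
  shows "op_norm N M \<le> c"
proof -
  have "\<forall>x. x extreme_point_of unit_ball N \<longrightarrow> N (M *v x) \<le> c"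
    using assms ext_to_D bipolar by blast
  hence "\<forall>x\<in>unit_ball N. N (M *v x) \<le> c" by (rule B_sub)
  thus ?thesis unfolding op_norm_def using zero_in_B[OF nN] by (auto intro!: cSup_least)
qed

lemma projconst_le: "P \<in> projections Y \<Longrightarrow> proj_const N Y \<le> op_norm N P"
  unfolding proj_const_def by (rule cInf_lower) (auto intro: opnorm_nn simp: bdd_below_def)

end

lemma involution_count:
  assumes "finite S" "\<forall>p\<in>S. \<sigma> p \<in> S" "\<forall>p\<in>S. \<sigma> (\<sigma> p) = p" "\<forall>p\<in>S. \<sigma> p \<noteq> p"
    "\<forall>p\<in>S. g (\<sigma> p) = g p"
  shows "2 * card (g ` S) \<le> card S"
  using assms
proof (induction "card S" arbitrary: S rule: less_induct)
  case less
  show ?case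
  proof (cases "S = {}")
    case True then show ?thesis by simp
  next
    case False
    then obtain p where p: "p \<in> S" by blast
    define S' where "S' = S - {p, \<sigma> p}"
    have sp: "\<sigma> p \<in> S" "\<sigma> p \<noteq> p" using less.prems p by auto
    have cS': "card S' = card S - 2" using less.prems(1) p sp by (simp add: S'_def card_Diff_subset)
    have cS: "card S \<ge> 2"
    proof -
      have "{p, \<sigma> p} \<subseteq> S" using p sp by auto
      hence "card {p, \<sigma> p} \<le> card S" using less.prems(1) by (rule card_mono[rotated])
      thus ?thesis using sp by simp
    qed
    have IH: "2 * card (g ` S') \<le> card S'"
    proof (rule less.hyps)
      show "card S' < card S" using cS' cS by simp
      show "finite S'" using less.prems(1) by (simp add: S'_def)
      show "\<forall>q\<in>S'. \<sigma> q \<in> S'"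
      proof
        fix q assume q: "q \<in> S'"
        hence q2: "q \<in> S" "q \<noteq> p" "q \<noteq> \<sigma> p" by (auto simp: S'_def)
        have "\<sigma> q \<noteq> p" using q2 less.prems(3) by metis
        moreover have "\<sigma> q \<noteq> \<sigma> p" using q2 p less.prems(3) by metis
        ultimately show "\<sigma> q \<in> S'" using q2 less.prems(2) by (auto simp: S'_def)
      qed
      show "\<forall>q\<in>S'. \<sigma> (\<sigma> q) = q" "\<forall>q\<in>S'. \<sigma> q \<noteq> q" "\<forall>q\<in>S'. g (\<sigma> q) = g q"
        using less.prems by (auto simp: S'_def)
    qed
    have "g ` S \<subseteq> insert (g p) (g ` S')"
      using less.prems(5) p by (auto simp: S'_def)
    hence "card (g ` S) \<le> card (insert (g p) (g ` S'))"
      using less.prems(1) by (intro card_mono) (auto simp: S'_def)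
    also have "\<dots> \<le> Suc (card (g ` S'))" by (rule card_insert_le_m1) auto
    finally show ?thesis using IH cS' cS by linarith
  qed
qed

lemma dim_cut:
  fixes S :: "'a::euclidean_space set"
  assumes "subspace S" "finite W"
  shows "dim S \<le> dim (S \<inter> {v. \<forall>w\<in>W. w \<bullet> v = 0}) + card W"
proof -
  let ?K = "{v. \<forall>w\<in>W. w \<bullet> v = 0}"
  have K: "?K = {y \<in> UNIV. \<forall>x\<in>span W. orthogonal x y}"
  proof (intro equalityI subsetI)
    fix y assume "y \<in> ?K"
    hence "\<forall>w\<in>W. orthogonal y w" by (simp add: orthogonal_def inner_commute)
    hence "\<forall>x\<in>span W. orthogonal y x" using orthogonal_to_span by blast
    thus "y \<in> {y \<in> UNIV. \<forall>x\<in>span W. orthogonal x y}" by (simp add: orthogonal_commute)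
  next
    fix y assume "y \<in> {y \<in> UNIV. \<forall>x\<in>span W. orthogonal x y}"
    thus "y \<in> ?K" by (auto simp: orthogonal_def span_base)
  qed
  have d1: "dim ?K + dim (span W) = dim (UNIV :: 'a set)"
    unfolding K by (rule dim_subspace_orthogonal_to_vectors) auto
  have d2: "dim (span W) \<le> card W" using assms(2) by (simp add: dim_le_card')
  have sK: "subspace ?K" unfolding K using subspace_orthogonal_to_vectors[of "span W"] by simp
  have d3: "dim {x + y |x y. x \<in> S \<and> y \<in> ?K} + dim (S \<inter> ?K) = dim S + dim ?K"
    using dim_sums_Int[OF assms(1) sK] .
  have d4: "dim {x + y |x y. x \<in> S \<and> y \<in> ?K} \<le> dim (UNIV :: 'a set)"
    by (rule dim_subset) auto
  show ?thesis using d1 d2 d3 d4 by linarith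
qed

definition tang :: "(real^'n) set \<Rightarrow> (real^'n^'n) set" where
  "tang Y = {v. (\<forall>x. v *v x \<in> Y) \<and> (\<forall>y\<in>Y. v *v y = 0)}"

lemma subspace_tang: assumes "subspace Y" shows "subspace (tang Y)"
  unfolding subspace_def tang_def
  using assms by (auto simp: mv_add mv_scale mv_zero subspace_0 subspace_add subspace_scale)

lemma dimUNIV_cart: "dim (UNIV :: (real^'n) set) = CARD('n)"
  by simp

lemma dim_tang: assumes Y: "subspace (Y :: (real^'n) set)"
  shows "dim Y * (CARD('n) - dim Y) \<le> dim (tang Y)"
proof -
  define Z where "Z = {y. \<forall>x\<in>Y. orthogonal x y}"
  have sZ: "subspace Z" unfolding Z_def by (rule subspace_orthogonal_to_vectors)
  have "dim {y \<in> UNIV. \<forall>x\<in>Y. orthogonal x y} + dim Y = dim (UNIV :: (real^'n) set)"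
    by (rule dim_subspace_orthogonal_to_vectors) (use Y in auto)
  hence dZ: "dim Z = CARD('n) - dim Y" unfolding Z_def by simp
  obtain BY where BY: "BY \<subseteq> Y" "pairwise orthogonal BY" "\<And>x. x \<in> BY \<Longrightarrow> norm x = 1"
      "independent BY" "card BY = dim Y" using orthonormal_basis_subspace[OF Y] by metis
  obtain BZ where BZ: "BZ \<subseteq> Z" "pairwise orthogonal BZ" "\<And>x. x \<in> BZ \<Longrightarrow> norm x = 1"
      "independent BZ" "card BZ = dim Z" using orthonormal_basis_subspace[OF sZ] by metis
  have fin: "finite BY" "finite BZ" using BY(4) BZ(4) independent_imp_finite by blast+
  have one: "x \<bullet> x = 1" if "x \<in> BY \<or> x \<in> BZ" for x using that BY(3) BZ(3) norm_eq_1 by blast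
  have orthY: "b \<bullet> b' = 0" if "b \<in> BY" "b' \<in> BY" "b \<noteq> b'" for b b'
    using BY(2) that by (auto simp: pairwise_def orthogonal_def)
  have orthZ: "b \<bullet> b' = 0" if "b \<in> BZ" "b' \<in> BZ" "b \<noteq> b'" for b b'
    using BZ(2) that by (auto simp: pairwise_def orthogonal_def)
  let ?g = "\<lambda>(b::real^'n, c::real^'n). outer b c"
  have ip: "?g p \<bullet> ?g q = (if p = q then 1 else 0)" if "p \<in> BY \<times> BZ" "q \<in> BY \<times> BZ" for p q
  proof -
    obtain b c b' c' where pq: "p = (b, c)" "q = (b', c')" by (cases p, cases q) auto
    show ?thesis using that orthY orthZ one unfolding pq by (auto simp: outer_outer)
  qed
  have inj: "inj_on ?g (BY \<times> BZ)"
  proof (rule inj_onI)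
    fix p q assume h: "p \<in> BY \<times> BZ" "q \<in> BY \<times> BZ" "?g p = ?g q"
    have "?g p \<bullet> ?g q = 1" using ip[OF h(1) h(1)] h(3) by simp
    thus "p = q" using ip[OF h(1) h(2)] by (auto split: if_splits)
  qed
  define E where "E = ?g ` (BY \<times> BZ)"
  have cE: "card E = dim Y * (CARD('n) - dim Y)"
    unfolding E_def using card_image[OF inj] BY(5) BZ(5) dZ by (simp add: card_cartesian_product)
  have pw: "pairwise orthogonal E"
    unfolding E_def pairwise_def orthogonal_def using ip by fastforce
  have z: "0 \<notin> E"
  proof
    assume "0 \<in> E"
    then obtain p where "p \<in> BY \<times> BZ" "?g p = 0" unfolding E_def by auto
    thus False using ip by force
  qed
  have ind: "independent E" by (rule pairwise_orthogonal_independent[OF pw z])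
  have sub: "E \<subseteq> tang Y"
  proof
    fix e assume "e \<in> E"
    then obtain b c where bc: "b \<in> BY" "c \<in> BZ" "e = outer b c" unfolding E_def by auto
    have bY: "b \<in> Y" using BY(1) bc by auto
    have cZ: "\<forall>y\<in>Y. c \<bullet> y = 0" using BZ(1) bc unfolding Z_def by (auto simp: orthogonal_def inner_commute)
    show "e \<in> tang Y" unfolding tang_def using bY cZ Y
      by (auto simp: bc outer_mult subspace_scale)
  qed
  show ?thesis using independent_card_le_dim[OF sub ind] cE by simp
qed

theorem mainTheorem9:
  fixes N :: "real ^ 'n \<Rightarrow> real" and Y :: "(real ^ 'n) set"
    and k m :: nat and P0 :: "real ^ 'n ^ 'n"
  assumes "polyhedral_norm N"
    and "subspace Y" and "dim Y = k" and "1 \<le> k" and "k \<le> CARD('n) - 1"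
    and "P0 \<in> min_projections N Y"
    and "card (norming_pairs N P0) \<le> m"
  shows "aff_dim (min_projections N Y) \<ge> int (k * (CARD('n) - k)) - int m + 1"
proof -
  note pN = assms(1)
  have nN: "is_norm N" by (rule nN[OF pN])
  define EB where "EB = {x. x extreme_point_of unit_ball N}"
  define ED where "ED = {x. x extreme_point_of dual_unit_ball N}"
  define Np where "Np = norming_pairs N P0"
  define lam where "lam = op_norm N P0"
  have P0proj: "P0 \<in> projections Y" and lamc: "lam = proj_const N Y"
    using assms(6) by (auto simp: min_projections_def lam_def)
  have finEB: "finite EB" unfolding EB_def by (rule finEB[OF pN])
  have finED: "finite ED" unfolding ED_def by (rule finED[OF pN])
  have EBB: "x \<in> unit_ball N" if "x \<in> EB" for x using that by (auto simp: EB_def extreme_point_of_def)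
  have EDD: "f \<in> dual_unit_ball N" if "f \<in> ED" for f using that by (auto simp: ED_def extreme_point_of_def)
  have EBne: "EB \<noteq> {}"
  proof
    assume "EB = {}"
    hence "unit_ball N = {}" using B_hull[OF pN] unfolding EB_def by simp
    thus False using zero_in_B[OF nN] by simp
  qed
  have EDne: "ED \<noteq> {}"
  proof
    assume "ED = {}"
    hence "dual_unit_ball N = {}" using D_hull[OF pN] unfolding ED_def by simp
    thus False using zero_in_D[OF nN] by simp
  qed
  have Np_sub: "Np \<subseteq> EB \<times> ED" by (auto simp: Np_def norming_pairs_def EB_def ED_def)
  have finNp: "finite Np" using Np_sub finEB finED by (meson finite_SigmaI finite_subset)
  have Np_iff: "(x, f) \<in> Np \<longleftrightarrow> x \<in> EB \<and> f \<in> ED \<and> f \<bullet> (P0 *v x) = lam" for x f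
    by (simp add: Np_def norming_pairs_def EB_def ED_def lam_def)
  have le_lam: "f \<bullet> (P0 *v x) \<le> lam" if "x \<in> EB" "f \<in> ED" for x f
  proof -
    have "f \<bullet> (P0 *v x) \<le> N (P0 *v x)" using D_le[OF nN EDD[OF that(2)]] .
    also have "\<dots> \<le> lam" unfolding lam_def using opnorm_ge[OF pN EBB[OF that(1)]] .
    finally show ?thesis .
  qed
  have Npne: "Np \<noteq> {}"
  proof
    assume e: "Np = {}"
    let ?vals = "(\<lambda>(x, f). f \<bullet> (P0 *v x)) ` (EB \<times> ED)"
    have fv: "finite ?vals" "?vals \<noteq> {}" using finEB finED EBne EDne by auto
    have "Max ?vals \<in> ?vals" using fv by (rule Max_in)
    then obtain x f where xf: "x \<in> EB" "f \<in> ED" "Max ?vals = f \<bullet> (P0 *v x)" by auto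
    have "f \<bullet> (P0 *v x) \<noteq> lam" using e Np_iff xf by blast
    hence cl: "Max ?vals < lam" using xf le_lam by force
    have "op_norm N P0 \<le> Max ?vals"
    proof (rule opnorm_le[OF pN], intro allI impI)
      fix x f assume "x extreme_point_of unit_ball N" "f extreme_point_of dual_unit_ball N"
      hence "(x, f) \<in> EB \<times> ED" by (simp add: EB_def ED_def)
      hence "f \<bullet> (P0 *v x) \<in> ?vals" by force
      thus "f \<bullet> (P0 *v x) \<le> Max ?vals" using fv by simp
    qed
    thus False using cl lam_def by simp
  qed
  define W where "W = (\<lambda>(x, f). outer f x) ` Np"
  have finW: "finite W" using finNp by (simp add: W_def)
  have cW: "2 * card W \<le> card Np"
    unfolding W_def
  proof (rule involution_count[where \<sigma> = "\<lambda>(x, f). (-x, -f)"])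
    show "finite Np" by fact
    show "\<forall>p\<in>Np. (case p of (x, f) \<Rightarrow> (- x, - f)) \<in> Np"
    proof (clarify)
      fix x f assume "(x, f) \<in> Np"
      hence h: "x \<in> EB" "f \<in> ED" "f \<bullet> (P0 *v x) = lam" using Np_iff by auto
      have "(-x) \<in> EB" using h(1) ext_sym[OF nN, of "unit_ball N" x] B_neg[OF nN] by (simp add: EB_def)
      moreover have "(-f) \<in> ED" using h(2) ext_sym[OF nN, of "dual_unit_ball N" f] D_neg[OF nN] by (simp add: ED_def)
      moreover have "(-f) \<bullet> (P0 *v (-x)) = lam" using h(3) by (simp add: mv_neg)
      ultimately show "(-x, -f) \<in> Np" using Np_iff by blast
    qed
    show "\<forall>p\<in>Np. (case case p of (x, f) \<Rightarrow> (- x, - f) of (x, f) \<Rightarrow> (- x, - f)) = p" by auto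
    show "\<forall>p\<in>Np. (case p of (x, f) \<Rightarrow> (- x, - f)) \<noteq> p"
    proof (clarify)
      fix x f assume "(x, f) \<in> Np" "- x = x"
      hence xe: "x \<in> EB" "- x = x" using Np_iff by auto
      hence "x + x = 0" by (metis add.right_inverse)
      hence "(2::real) *\<^sub>R x = 0" by (simp add: scaleR_2)
      hence "x \<in> EB" "x = 0" using xe by auto
      thus False using zero_not_ext[OF nN] by (simp add: EB_def)
    qed
    show "\<forall>p\<in>Np. (case case p of (x, f) \<Rightarrow> (- x, - f) of (x, f) \<Rightarrow> outer f x) = (case p of (x, f) \<Rightarrow> outer f x)"
      by (auto simp: outer_neg)
  qed
  have cW1: "card W \<ge> 1" using Npne finW by (simp add: W_def Suc_le_eq card_gt_0_iff finNp)
  define K where "K = {v::real^'n^'n. \<forall>w\<in>W. w \<bullet> v = 0}"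
  define V where "V = tang Y \<inter> K"
  have sK: "subspace K" unfolding K_def subspace_def by (auto simp: inner_add_right)
  have sV: "subspace V" unfolding V_def using subspace_tang[OF assms(2)] sK by (simp add: subspace_inter)
  have dV: "dim (tang Y) \<le> dim V + card W" unfolding V_def K_def
    by (rule dim_cut[OF subspace_tang[OF assms(2)] finW])
  have dT: "k * (CARD('n) - k) \<le> dim (tang Y)" using dim_tang[OF assms(2)] assms(3) by simp
  define Q where "Q = (EB \<times> ED) - Np"
  define U where "U = \<Inter> ((\<lambda>p. {v. outer (snd p) (fst p) \<bullet> v < lam - snd p \<bullet> (P0 *v fst p)}) ` Q)"
  have oU: "open U" unfolding U_def
    using finEB finED by (intro open_Inter) (auto simp: Q_def open_halfspace_lt)
  have U0: "0 \<in> U"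
  proof -
    have "snd p \<bullet> (P0 *v fst p) < lam" if "p \<in> Q" for p
    proof -
      obtain x f where p: "p = (x, f)" by (cases p)
      have "x \<in> EB" "f \<in> ED" "(x, f) \<notin> Np" using that by (auto simp: Q_def p)
      thus ?thesis using le_lam Np_iff by (force simp: p)
    qed
    thus ?thesis by (simp add: U_def)
  qed
  have inPmin: "P0 + v \<in> min_projections N Y" if v: "v \<in> V \<inter> U" for v
  proof -
    have vT: "v \<in> tang Y" and vK: "v \<in> K" and vU: "v \<in> U" using v by (auto simp: V_def)
    have proj: "P0 + v \<in> projections Y"
      using P0proj vT assms(2) by (auto simp: projections_def tang_def mv_add subspace_add)
    have "op_norm N (P0 + v) \<le> lam"
    proof (rule opnorm_le[OF pN], intro allI impI)
      fix x f assume "x extreme_point_of unit_ball N" "f extreme_point_of dual_unit_ball N"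
      hence xf: "x \<in> EB" "f \<in> ED" by (auto simp: EB_def ED_def)
      have eq: "f \<bullet> ((P0 + v) *v x) = f \<bullet> (P0 *v x) + outer f x \<bullet> v"
        by (simp add: mv_add outer_inner_mat inner_add_right)
      show "f \<bullet> ((P0 + v) *v x) \<le> lam"
      proof (cases "(x, f) \<in> Np")
        case True
        hence "outer f x \<in> W" by (force simp: W_def)
        hence "outer f x \<bullet> v = 0" using vK by (simp add: K_def)
        thus ?thesis using True Np_iff eq by simp
      next
        case False
        hence "(x, f) \<in> Q" using xf by (simp add: Q_def)
        hence "outer f x \<bullet> v < lam - f \<bullet> (P0 *v x)" using vU by (force simp: U_def)
        thus ?thesis using eq by simp
      qed
    qed
    moreover have "proj_const N Y \<le> op_norm N (P0 + v)" by (rule projconst_le[OF pN proj])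
    ultimately show ?thesis using proj lamc by (simp add: min_projections_def)
  qed
  have "aff_dim ((\<lambda>v. P0 + v) ` (V \<inter> U)) \<le> aff_dim (min_projections N Y)"
    by (rule aff_dim_subset) (use inPmin in auto)
  moreover have "aff_dim ((\<lambda>v. P0 + v) ` (V \<inter> U)) = aff_dim (V \<inter> U)"
    by (rule aff_dim_translation_eq)
  moreover have "aff_dim (V \<inter> U) = aff_dim V"
    using sV oU U0 subspace_0[OF sV] by (intro aff_dim_convex_Int_open) (auto simp: subspace_imp_convex)
  moreover have "aff_dim V = int (dim V)" using sV by (rule aff_dim_subspace)
  moreover have "card Np \<le> m" using assms(7) by (simp add: Np_def)
  ultimately show ?thesis using dV dT cW cW1 by linarith
qed

end
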